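(* The set $\mathcal{E}_2$ of all $2$-essential subsets of $\operatorname{codes}(\{0,1\})$ is finite.
   Context: A coronal code over $S$ of length $m$ is a formal string $x=c:p_0p_1\dots p_{m-1}$ with $c,p_i\in S$; $\operatorname{center}(x)=c$, $\operatorname{petals}(x)=\{p_0,\dots,p_{m-1}\}$; codes are identified up to rotation/reversal of the petal string, giving $\operatorname{codes}(S)$. For $a,b,c\in S$ (indeterminates), $c^a_b:=\arccos\!\Big(\frac{(c+a)^2+(c+b)^2-(a+b)^2}{2(c+a)(c+b)}\Big)$, and $\alpha(x):=\sum_{i=0}^{m-1} c^{p_i}_{p_{i+1\bmod m}}$. For $\rho\in(0,\infty)^S$, $\alpha(x)|_\rho$ is the value obtained by substituting $\rho(s)$ for each symbol $s$. For $S=\{0,\dots,n-1\}$, a nonempty $C\subseteq\operatorname{codes}(S)$ is fundamental if $\{\operatorname{center}(x):x\in C\}=\{0,\dots,n-2\}$ and for every nonempty $K\subseteq\{0,\dots,n-2\}$ there is $D\subseteq C$ with $\{\operatorname{center}(x):x\in D\}=K$ and $\big(\bigcup_{x\in D}\operatorname{petals}(x)\big)\setminus K\ne\emptyset$. $C$ is $n$-essential if it is fundamental and there exist nondecreasing maps $\rho,\sigma:S\to(0,\infty)$ with $\alpha(x)|_\rho\le2\pi\le\alpha(x)|_\sigma$ for all $x\in C$. *)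

theory Defs
  imports Complex_Main
begin

text \<open>A raw coronal code c:p_0...p_{m-1} is a pair (c, [p_0,...,p_{m-1}]).
  Codes are identified up to rotation/reversal of the petal string; a code is
  the equivalence class of a raw code.\<close>

type_synonym raw_code = "nat \<times> nat list"

definition raw_equiv :: "raw_code \<Rightarrow> raw_code \<Rightarrow> bool" where
  "raw_equiv x y \<longleftrightarrow> fst x = fst y \<and>
     (\<exists>k. snd y = rotate k (snd x) \<or> snd y = rotate k (rev (snd x)))"

definition code_class :: "raw_code \<Rightarrow> raw_code set" where
  "code_class x = {y. raw_equiv x y}"

definition codes :: "nat set \<Rightarrow> raw_code set set" where
  "codes S = {code_class (c, ps) | c ps. c \<in> S \<and> set ps \<subseteq> S}"

definition rep :: "raw_code set \<Rightarrow> raw_code" where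
  "rep X = (SOME x. x \<in> X)"

definition center :: "raw_code set \<Rightarrow> nat" where
  "center X = fst (rep X)"

definition petals :: "raw_code set \<Rightarrow> nat set" where
  "petals X = set (snd (rep X))"

definition corner :: "real \<Rightarrow> real \<Rightarrow> real \<Rightarrow> real" where
  "corner c a b = arccos (((c + a)^2 + (c + b)^2 - (a + b)^2) / (2 * (c + a) * (c + b)))"

definition alpha_raw :: "(nat \<Rightarrow> real) \<Rightarrow> raw_code \<Rightarrow> real" where
  "alpha_raw \<rho> x = (let c = fst x; ps = snd x; m = length ps in
     (\<Sum>i<m. corner (\<rho> c) (\<rho> (ps ! i)) (\<rho> (ps ! ((i + 1) mod m)))))"

definition alpha :: "(nat \<Rightarrow> real) \<Rightarrow> raw_code set \<Rightarrow> real" where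
  "alpha \<rho> X = alpha_raw \<rho> (rep X)"

definition fundamental :: "nat \<Rightarrow> raw_code set set \<Rightarrow> bool" where
  "fundamental n C \<longleftrightarrow> C \<subseteq> codes {0..<n} \<and> C \<noteq> {} \<and>
     center ` C = {0..<n-1} \<and>
     (\<forall>K. K \<noteq> {} \<and> K \<subseteq> {0..<n-1} \<longrightarrow>
        (\<exists>D \<subseteq> C. center ` D = K \<and> (\<Union>x\<in>D. petals x) - K \<noteq> {}))"

definition essential :: "nat \<Rightarrow> raw_code set set \<Rightarrow> bool" where
  "essential n C \<longleftrightarrow> fundamental n C \<and>
     (\<exists>\<rho> \<sigma> :: nat \<Rightarrow> real.
        mono_on {0..<n} \<rho> \<and> mono_on {0..<n} \<sigma> \<and>
        (\<forall>s\<in>{0..<n}. 0 < \<rho> s \<and> 0 < \<sigma> s) \<and>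
        (\<forall>x\<in>C. alpha \<rho> x \<le> 2 * pi \<and> 2 * pi \<le> alpha \<sigma> x))"

end

theory Submission
  imports Defs
begin

lemma corner_ge:
  fixes c a b :: real
  assumes "0 < c" "c \<le> a" "c \<le> b"
  shows "pi / 3 \<le> corner c a b"
proof -
  define y where "y = ((c + a)^2 + (c + b)^2 - (a + b)^2) / (2 * (c + a) * (c + b))"
  have pos: "0 < (c + a) * (c + b)" using assms by simp
  have yeq: "y = 1 - 2 * a * b / ((c + a) * (c + b))"
    using pos unfolding y_def by (simp add: field_simps power2_eq_square)
  have "a * b < (c + a) * (c + b)" using assms by (simp add: algebra_simps) (smt (verit) mult_pos_pos)
  hence "a * b / ((c + a) * (c + b)) < 1" using pos by simp
  hence y1: "-1 \<le> y" using yeq by simp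
  have "(c + a) * (c + b) \<le> (2*a) * (2*b)" using assms by (intro mult_mono) auto
  hence "1/4 \<le> a * b / ((c + a) * (c + b))" using pos by (simp add: field_simps)
  hence y2: "y \<le> 1/2" using yeq by (simp add: mult_ac)
  have "arccos (1/2) \<le> arccos y" by (rule arccos_le_arccos) (use y1 y2 in auto)
  thus ?thesis unfolding corner_def y_def[symmetric] by simp
qed

lemma raw_equiv_props:
  assumes "raw_equiv x y"
  shows "fst y = fst x" "length (snd y) = length (snd x)" "set (snd y) = set (snd x)"
  using assms unfolding raw_equiv_def by auto

lemma mem_bound:
  assumes E: "essential 2 C" and X: "X \<in> C" and XC: "X \<in> codes {0..<2}"
  shows "X \<in> code_class ` ({0..<2} \<times> {ps. set ps \<subseteq> {0..<2} \<and> length ps \<le> 6})"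
proof -
  obtain c ps where X': "X = code_class (c, ps)" and c: "c \<in> {0..<2}" and ps: "set ps \<subseteq> {0..<2}"
    using XC unfolding codes_def by auto
  have "(c, ps) \<in> X" unfolding X' code_class_def raw_equiv_def
    by (auto intro: exI[of _ 0])
  hence "rep X \<in> X" unfolding rep_def by (rule someI)
  hence req: "raw_equiv (c, ps) (rep X)" unfolding X' code_class_def by simp
  obtain c' ps' where r: "rep X = (c', ps')" by (cases "rep X")
  have len: "length ps' = length ps" and st: "set ps' = set ps" and cc: "c' = c"
    using raw_equiv_props[OF req] r by auto
  have fund: "fundamental 2 C" using E unfolding essential_def by simp
  have "center ` C = {0..<1}" using fund unfolding fundamental_def by simp
  hence "center X \<in> {0..<1}" using X by blast
  hence c0: "c' = 0" unfolding center_def r by simp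
  obtain \<rho> where mono: "mono_on {0..<2} \<rho>" and posr: "\<forall>s\<in>{0..<2::nat}. 0 < \<rho> s"
    and al: "alpha \<rho> X \<le> 2 * pi"
    using E X unfolding essential_def by blast
  define m where "m = length ps'"
  have each: "pi / 3 \<le> corner (\<rho> 0) (\<rho> (ps' ! i)) (\<rho> (ps' ! ((i + 1) mod m)))" if "i < m" for i
  proof -
    have "m > 0" using that by simp
    have "(i + 1) mod m < m" using \<open>m > 0\<close> by simp
    hence in1: "ps' ! i \<in> {0..<2}" and in2: "ps' ! ((i + 1) mod m) \<in> {0..<2}"
      using that ps st unfolding m_def by (metis nth_mem subsetD)+
    show ?thesis
      apply (rule corner_ge)
      using posr apply simp
      using mono in1 in2 by (auto intro: mono_onD)
  qed
  have "(\<Sum>i<m. pi / 3) \<le> (\<Sum>i<m. corner (\<rho> 0) (\<rho> (ps' ! i)) (\<rho> (ps' ! ((i + 1) mod m))))"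
    by (rule sum_mono) (use each in auto)
  also have "\<dots> = alpha \<rho> X" unfolding alpha_def alpha_raw_def r c0 m_def Let_def by simp
  finally have "real m * (pi / 3) \<le> alpha \<rho> X" by simp
  hence "real m * (pi / 3) \<le> 2 * pi" using al by linarith
  hence "real m * pi \<le> 6 * pi" by simp
  hence "real m \<le> 6" using pi_gt_zero by simp
  hence "length ps \<le> 6" using len m_def by simp
  thus ?thesis using X' c ps by auto
qed

theorem lemma6p5:
  shows "finite {C. C \<subseteq> codes {0..<2} \<and> essential 2 C}"
proof -
  define F where "F = code_class ` ({0..<2} \<times> {ps. set ps \<subseteq> {0..<2::nat} \<and> length ps \<le> 6})"
  have "finite F" unfolding F_def
    by (intro finite_imageI finite_cartesian_product finite_lists_length_le) auto
  moreover have "{C. C \<subseteq> codes {0..<2} \<and> essential 2 C} \<subseteq> Pow F"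
    using mem_bound unfolding F_def by blast
  ultimately show ?thesis by (meson finite_Pow_iff finite_subset)
qed

end
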